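(* Let $\kappa=-1$ and, for $\sigma\in[0,1]$ and $h>0$, define $$f(\sigma,h^{-1})=-\tfrac14\pi+\Im\log\Gamma\big(\tfrac34-\tfrac12\sigma+\tfrac12 i\kappa h^{-1}\big)-\Im\log\Gamma\big(\tfrac14-\tfrac12\sigma+\tfrac12 i\kappa h^{-1}\big).$$ Then for all $0<h^{-1}<\infty$ we have $-\frac\pi2<f(0,h^{-1})<0$ and $-\frac{3\pi}2<f(1,h^{-1})<-\frac\pi2$, and $\partial_\sigma f(\sigma,h^{-1})<0$ for all $0<\sigma<1$ and $0<h^{-1}<\infty$. Hence there are no solutions of $f(\sigma,h^{-1})\in2\pi\mathbb{Z}$ with $0<\sigma<1$ and $0<h^{-1}<\infty$.
   Context: $\log\Gamma$ denotes the branch of the logarithm of the Gamma function which is analytic on $\mathbb{C}\setminus(-\infty,0]$ and satisfies $\log\Gamma(1)=0$. *)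

theory Defs
  imports "HOL-Analysis.Analysis"
begin

text \<open>kappa = -1. The paper's f(sigma, h^{-1}); here the second argument t stands for h^{-1}.
  ln_Gamma on complex numbers is the library's principal branch of log Gamma
  (holomorphic on C minus (-inf,0], with ln_Gamma 1 = 0).\<close>

definition kappa :: real where "kappa = -1"

definition f_sig :: "real \<Rightarrow> real \<Rightarrow> real" where
  "f_sig \<sigma> t =
     - pi / 4
     + Im (ln_Gamma (Complex (3/4 - \<sigma>/2) (kappa * t / 2)))
     - Im (ln_Gamma (Complex (1/4 - \<sigma>/2) (kappa * t / 2)))"

end

theory Submission
  imports Defs
begin

lemma vd_Im:
  assumes "(F has_vector_derivative D) (at x)"
  shows "((\<lambda>s. Im (F s)) has_real_derivative Im D) (at x)"
proof -
  have "((\<lambda>s. Im (F s)) has_derivative (\<lambda>h. Im (h *\<^sub>R D))) (at x)"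
    using bounded_linear.has_derivative[OF bounded_linear_Im assms[unfolded has_vector_derivative_def]] .
  then show ?thesis
    unfolding has_real_derivative_iff_has_vector_derivative has_vector_derivative_def
    by (simp add: mult.commute)
qed

lemma deriv_ImlnG:
  fixes c d \<sigma> :: real
  assumes "d \<noteq> 0"
  shows "((\<lambda>s. Im (ln_Gamma (Complex (c - s/2) d))) has_real_derivative
           Im (- Digamma (Complex (c - \<sigma>/2) d) / 2)) (at \<sigma>)"
proof -
  define g where "g z = of_real c - z/2 + \<i> * of_real d" for z :: complex
  have eq: "Complex (c - s/2) d = g (of_real s)" for s
    by (simp add: g_def complex_eq_iff)
  have nz: "g z \<notin> \<real>\<^sub>\<le>\<^sub>0" if "Im z = 0" for z
    using assms that by (simp add: g_def complex_nonpos_Reals_iff)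
  have "((\<lambda>z. ln_Gamma (g z)) has_field_derivative Digamma (g (of_real \<sigma>)) * (- 1/2)) (at (of_real \<sigma>))"
    unfolding g_def
    by (rule DERIV_chain2[OF has_field_derivative_ln_Gamma_complex])
       (use nz[of "of_real \<sigma>"] in \<open>auto simp: g_def intro!: derivative_eq_intros\<close>)
  from has_vector_derivative_real_field[OF this]
  have "((\<lambda>s. ln_Gamma (g (of_real s))) has_vector_derivative - Digamma (g (of_real \<sigma>)) / 2) (at \<sigma>)"
    by simp
  from vd_Im[OF this] show ?thesis by (simp add: eq)
qed

lemma Im_Digamma_diff_pos:
  fixes a y :: real
  assumes "y < 0" "a \<ge> 1/4"
  shows "Im (Digamma (Complex (a - 1/2) y)) < Im (Digamma (Complex a y))"
proof -
  define A where "A = Complex a y"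
  define B where "B = Complex (a - 1/2) y"
  have A0: "A \<noteq> 0" and B0: "B \<noteq> 0" using assms by (auto simp: A_def B_def complex_eq_iff)
  have "(\<lambda>k. (inverse (of_nat (Suc k)) - inverse (A + of_nat k)) - (inverse (of_nat (Suc k)) - inverse (B + of_nat k)))
         sums ((Digamma A + euler_mascheroni) - (Digamma B + euler_mascheroni))"
    using summable_Digamma[OF A0] summable_Digamma[OF B0]
    by (intro sums_diff) (auto simp: Digamma_def summable_sums)
  hence "(\<lambda>k. inverse (B + of_nat k) - inverse (A + of_nat k)) sums (Digamma A - Digamma B)"
    by simp
  from sums_Im[OF this]
  have S: "(\<lambda>k. Im (inverse (B + of_nat k)) - Im (inverse (A + of_nat k))) sums (Im (Digamma A) - Im (Digamma B))"
    by simp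
  define T where "T k = Im (inverse (B + of_nat k)) - Im (inverse (A + of_nat k))" for k :: nat
  have Teq: "T k = (-y) * (1 / ((a - 1/2 + k)^2 + y^2) - 1 / ((a + k)^2 + y^2))" for k
  proof -
    have e1: "B + of_nat k = Complex (a - 1/2 + k) y" by (simp add: B_def complex_eq_iff)
    have e2: "A + of_nat k = Complex (a + k) y" by (simp add: A_def complex_eq_iff)
    have i: "Im (inverse (Complex u v)) = - v / (u^2 + v^2)" for u v
      by (simp add: Im_inverse power2_eq_square)
    have p1: "(a - 1/2 + k)^2 + y^2 > 0" "(a + k)^2 + y^2 > 0" using assms by (auto intro: add_nonneg_pos)
    show ?thesis unfolding T_def e1 e2 i using p1 by (simp add: field_simps)
  qed
  have le: "(a - 1/2 + k)^2 \<le> (a + k)^2" for k :: nat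
  proof -
    have "(a + k)^2 - (a - 1/2 + k)^2 = (2*a - 1/2 + 2*k) / 2" by (simp add: power2_eq_square field_simps)
    also have "\<dots> \<ge> 0" using assms by simp
    finally show ?thesis by simp
  qed
  have lt: "(a - 1/2 + 1)^2 < (a + 1)^2"
  proof -
    have "(a + 1)^2 - (a - 1/2 + 1)^2 = (2*a - 1/2 + 2) / 2" by (simp add: power2_eq_square field_simps)
    also have "\<dots> > 0" using assms by simp
    finally show ?thesis by simp
  qed
  have y2: "y^2 > 0" using assms by simp
  have "T k \<ge> 0" for k
  proof -
    have "1 / ((a + k)^2 + y^2) \<le> 1 / ((a - 1/2 + k)^2 + y^2)"
      using le[of k] y2 by (intro divide_left_mono) (auto intro!: add_pos_nonneg mult_pos_pos add_nonneg_pos)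
    thus ?thesis unfolding Teq using assms by (intro mult_nonneg_nonneg) auto
  qed
  moreover have "T 1 > 0"
  proof -
    have "1 / ((a + 1)^2 + y^2) < 1 / ((a - 1/2 + 1)^2 + y^2)"
      using lt y2 by (intro divide_strict_left_mono) (auto intro!: add_pos_nonneg mult_pos_pos add_nonneg_pos)
    thus ?thesis unfolding Teq using assms by (intro mult_pos_pos) auto
  qed
  moreover have "summable T" using S unfolding T_def by (rule sums_summable)
  ultimately have "suminf T > 0" by (intro suminf_pos2[where i=1]) auto
  moreover have "suminf T = Im (Digamma A) - Im (Digamma B)" using S unfolding T_def by (rule sums_unique[symmetric])
  ultimately show ?thesis unfolding A_def B_def by simp
qed


lemma int_valued_const:
  fixes h :: "'a::topological_space \<Rightarrow> real"
  assumes S: "connected S" and c: "continuous_on S h" and I: "\<And>x. x \<in> S \<Longrightarrow> h x \<in> \<int>"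
      and a: "a \<in> S" and x: "x \<in> S"
  shows "h x = h a"
proof -
  have "h constant_on S"
  proof (rule continuous_discrete_range_constant[OF S c])
    fix x assume x: "x \<in> S"
    show "\<exists>e>0. \<forall>y. y \<in> S \<and> h y \<noteq> h x \<longrightarrow> e \<le> norm (h y - h x)"
    proof (intro exI[of _ 1] conjI allI impI)
      fix y assume y: "y \<in> S \<and> h y \<noteq> h x"
      from I[OF x] obtain m where m: "h x = of_int m" by (auto elim: Ints_cases)
      from I[of y] y obtain n where n: "h y = of_int n" by (auto elim: Ints_cases)
      from y m n have "m \<noteq> n" by auto
      hence "1 \<le> \<bar>n - m\<bar>" by linarith
      thus "1 \<le> norm (h y - h x)" using m n by (simp flip: of_int_diff)
    qed simp
  qed
  then obtain c where "\<And>x. x \<in> S \<Longrightarrow> h x = c" unfolding constant_on_def by blast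
  with a x show ?thesis by simp
qed

lemma Im_div_2pi_Ints:
  assumes "exp F = of_real r" "r > 0"
  shows "Im F / (2*pi) \<in> \<int>"
proof -
  have "exp F = exp (of_real (ln r))" using assms by (simp add: exp_of_real)
  then obtain n :: int where "F = of_real (ln r) + (of_int (2 * n) * pi) * \<i>" unfolding exp_eq by blast
  hence "Im F / (2*pi) = of_int n" by simp
  thus ?thesis by simp
qed

lemma Complex_eq': "Complex x y = of_real x + \<i> * of_real y"
  by (simp add: complex_eq_iff)

lemma g_identity:
  fixes y :: real
  shows "Im (ln_Gamma (Complex (3/4) y)) - Im (ln_Gamma (Complex (1/4) y))
         = Im (Ln (sin (of_real pi * Complex (1/4) y)))"
proof -
  define A where "A y = Complex (3/4) y" for y
  define B where "B y = Complex (1/4) y" for y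
  define F where "F y = ln_Gamma (A y) - ln_Gamma (B y) - Ln (sin (of_real pi * B y))" for y
  have A_nn: "A y \<notin> \<real>\<^sub>\<le>\<^sub>0" "A y \<notin> \<int>\<^sub>\<le>\<^sub>0" for y
    using nonpos_Ints_subset_nonpos_Reals by (auto simp: A_def complex_nonpos_Reals_iff)
  have B_nn: "B y \<notin> \<real>\<^sub>\<le>\<^sub>0" "B y \<notin> \<int>\<^sub>\<le>\<^sub>0" for y
    using nonpos_Ints_subset_nonpos_Reals by (auto simp: B_def complex_nonpos_Reals_iff)
  have sinRe: "Re (sin (of_real pi * B y)) > 0" for y
  proof -
    have "Re (sin (of_real pi * B y)) = sin (pi/4) * (exp (pi*y) + exp (- (pi*y))) / 2"
      by (simp add: Re_sin B_def)
    also have "\<dots> > 0" by (intro divide_pos_pos mult_pos_pos add_pos_pos sin_gt_zero) auto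
    finally show ?thesis .
  qed
  have sin_nn: "sin (of_real pi * B y) \<notin> \<real>\<^sub>\<le>\<^sub>0" for y
    using sinRe[of y] by (auto simp: complex_nonpos_Reals_iff)
  have sin_nz: "sin (of_real pi * B y) \<noteq> 0" for y using sinRe[of y] by auto
  have cont: "continuous_on UNIV (\<lambda>y. Im (F y) / (2*pi))"
    unfolding F_def A_def B_def Complex_eq'
    by (intro continuous_intros continuous_at_imp_continuous_on ballI isCont_ln_Gamma_complex isCont_Ln'
       | use A_nn B_nn sin_nn in \<open>simp add: A_def B_def Complex_eq'\<close>)+
  have ints: "Im (F y) / (2*pi) \<in> \<int>" for y
  proof -
    have G: "Gamma (A y) \<noteq> 0" "Gamma (B y) \<noteq> 0" using A_nn B_nn by (auto simp: Gamma_eq_zero_iff)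
    have c: "1 - B y = cnj (A y)" by (simp add: A_def B_def complex_eq_iff)
    have refl: "Gamma (B y) * Gamma (cnj (A y)) = of_real pi / sin (of_real pi * B y)"
      using Gamma_reflection_complex[of "B y"] c by simp
    have "exp (F y) = Gamma (A y) / Gamma (B y) / sin (of_real pi * B y)"
      using A_nn B_nn sin_nz by (simp add: F_def exp_diff Gamma_complex_altdef)
    also have "\<dots> = Gamma (A y) * Gamma (cnj (A y)) / of_real pi"
      using G sin_nz refl by (simp add: field_simps)
    also have "\<dots> = of_real (((Re (Gamma (A y)))^2 + (Im (Gamma (A y)))^2) / pi)"
      by (simp flip: cnj_Gamma add: complex_mult_cnj)
    finally show ?thesis
      by (rule Im_div_2pi_Ints) (use G in \<open>simp add: complex_neq_0\<close>)
  qed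
  have "Im (F y) / (2*pi) = Im (F 0) / (2*pi)"
    by (rule int_valued_const[OF connected_UNIV cont ints]) auto
  moreover have "Im (F 0) = 0"
  proof -
    have a: "A 0 = of_real (3/4)" "B 0 = of_real (1/4)" by (simp_all add: A_def B_def complex_eq_iff)
    have "sin (of_real pi * B 0) = of_real (sin (pi/4))" by (simp add: a flip: sin_of_real)
    moreover have "sin (pi/4) > 0" by (rule sin_gt_zero) auto
    ultimately have l3: "Im (Ln (sin (of_real pi * B 0))) = 0" by (simp add: Ln_of_real)
    have l1: "Im (ln_Gamma (A 0)) = 0" unfolding a(1)
      by (subst ln_Gamma_complex_of_real) auto
    have l2: "Im (ln_Gamma (B 0)) = 0" unfolding a(2)
      by (subst ln_Gamma_complex_of_real) auto
    show ?thesis using l1 l2 l3 by (simp add: F_def)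
  qed
  ultimately have "Im (F y) = 0" by simp
  thus ?thesis by (simp add: F_def A_def B_def)
qed


lemma g_bound:
  fixes y :: real
  shows "\<bar>Im (Ln (sin (of_real pi * Complex (1/4) y)))\<bar> < pi/4"
proof -
  define w where "w = sin (of_real pi * Complex (1/4) y)"
  have Re: "Re w = sin (pi/4) * (exp (pi*y) + exp (- (pi*y))) / 2" by (simp add: w_def Re_sin)
  have Im: "Im w = cos (pi/4) * (exp (pi*y) - exp (- (pi*y))) / 2" by (simp add: w_def Im_sin)
  have s: "sin (pi/4) > 0" by (rule sin_gt_zero) auto
  have pos: "Re w > 0" unfolding Re using s by (intro divide_pos_pos mult_pos_pos add_pos_pos) auto
  hence "w \<noteq> 0" by auto
  have "\<bar>Im w / Re w\<bar> = \<bar>exp (pi*y) - exp (- (pi*y))\<bar> / (exp (pi*y) + exp (- (pi*y)))"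
    unfolding Re Im using s by (simp add: abs_divide abs_mult cos_45 sin_45)
  also have "\<dots> < 1"
    by (subst divide_less_eq_1_pos) (auto simp: abs_less_iff add_pos_pos)
  finally have u0: "\<bar>Im w / Re w\<bar> < 1" .
  have u: "- 1 < Im w / Re w" "Im w / Re w < 1" using u0 by (auto simp only: abs_less_iff)
  have "Im (Ln w) = arctan (Im w / Re w)" using pos \<open>w \<noteq> 0\<close> by (simp add: Im_Ln_eq)
  moreover have "arctan (Im w / Re w) < arctan 1" using u by (intro arctan_less_iff[THEN iffD2]) auto
  moreover have "arctan (-1) < arctan (Im w / Re w)" using u by (intro arctan_less_iff[THEN iffD2]) auto
  ultimately show ?thesis unfolding w_def by (auto simp: arctan_one arctan_minus)
qed

lemma lnGamma_rec:
  fixes y :: real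
  assumes "y < 0"
  shows "Im (ln_Gamma (Complex (3/4) y)) = Im (Ln (Complex (-1/4) y)) + Im (ln_Gamma (Complex (-1/4) y))"
proof -
  define S where "S = {z::complex. Im z < 0} \<union> {z. Re z > 0}"
  have ne: "{z::complex. Im z < 0} \<inter> {z. Re z > 0} \<noteq> {}"
  proof -
    have "Complex 1 (-1) \<in> {z::complex. Im z < 0} \<inter> {z. Re z > 0}" by simp
    thus ?thesis by blast
  qed
  have conn: "connected S" unfolding S_def
    by (intro connected_Un convex_connected convex_halfspace_Im_lt convex_halfspace_Re_gt ne)
  have nn: "z \<notin> \<real>\<^sub>\<le>\<^sub>0" "z + 1 \<notin> \<real>\<^sub>\<le>\<^sub>0" "z \<notin> \<int>\<^sub>\<le>\<^sub>0" "z + 1 \<notin> \<int>\<^sub>\<le>\<^sub>0" if "z \<in> S" for z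
    using that nonpos_Ints_subset_nonpos_Reals by (auto simp: S_def complex_nonpos_Reals_iff)
  define F where "F z = ln_Gamma (z + 1) - Ln z - ln_Gamma z" for z
  have cont: "continuous_on S (\<lambda>z. Im (F z) / (2*pi))"
    unfolding F_def
    by (intro continuous_intros continuous_at_imp_continuous_on ballI isCont_ln_Gamma_complex isCont_Ln'
       | use nn in \<open>simp\<close>)+
  have ints: "Im (F z) / (2*pi) \<in> \<int>" if "z \<in> S" for z
  proof -
    have z0: "z \<noteq> 0" using nn(1)[OF that] by auto
    have G: "Gamma z \<noteq> 0" using nn(3)[OF that] by (auto simp: Gamma_eq_zero_iff)
    have "exp (F z) = Gamma (z + 1) / z / Gamma z"
      using nn[OF that] z0 by (simp add: F_def exp_diff Gamma_complex_altdef)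
    also have "\<dots> = of_real 1" using Gamma_plus1[OF nn(3)[OF that]] z0 G by simp
    finally show ?thesis by (rule Im_div_2pi_Ints) simp
  qed
  have oneS: "1 \<in> S" by (simp add: S_def)
  define z where "z = Complex (-1/4) y"
  have zS: "z \<in> S" using assms by (simp add: S_def z_def)
  have "Im (F z) / (2*pi) = Im (F 1) / (2*pi)" by (rule int_valued_const[OF conn cont ints oneS zS]) auto
  moreover have "Im (F 1) = 0"
  proof -
    have "ln_Gamma (1 + 1 :: complex) = of_real (ln_Gamma 2)"
      using ln_Gamma_complex_of_real[of 2] by simp
    moreover have "ln_Gamma (1 :: complex) = of_real (ln_Gamma 1)"
      using ln_Gamma_complex_of_real[of 1] by simp
    ultimately show ?thesis by (simp add: F_def)
  qed
  ultimately have "Im (F z) = 0" by simp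
  moreover have "z + 1 = Complex (3/4) y" by (simp add: z_def complex_eq_iff)
  ultimately show ?thesis by (simp add: F_def z_def)
qed


lemma f_sig_eq:
  "f_sig s t = - pi/4 + Im (ln_Gamma (Complex (3/4 - s/2) (- t/2))) - Im (ln_Gamma (Complex (1/4 - s/2) (- t/2)))"
  by (simp add: f_sig_def kappa_def)

lemma f_deriv:
  fixes \<sigma> t :: real
  assumes "t > 0" "\<sigma> \<le> 1"
  shows "\<exists>D. ((\<lambda>s. f_sig s t) has_real_derivative D) (at \<sigma>) \<and> D < 0"
proof -
  have y: "- t/2 \<noteq> 0" "- t/2 < 0" using assms by auto
  have d: "((\<lambda>s. f_sig s t) has_real_derivative
       0 + Im (- Digamma (Complex (3/4 - \<sigma>/2) (- t/2)) / 2) - Im (- Digamma (Complex (1/4 - \<sigma>/2) (- t/2)) / 2)) (at \<sigma>)"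
    unfolding f_sig_eq
    by (intro DERIV_diff DERIV_add DERIV_const deriv_ImlnG y(1))
  have "Im (Digamma (Complex ((3/4 - \<sigma>/2) - 1/2) (- t/2))) < Im (Digamma (Complex (3/4 - \<sigma>/2) (- t/2)))"
    by (rule Im_Digamma_diff_pos) (use assms in auto)
  moreover have "(3/4 - \<sigma>/2) - 1/2 = 1/4 - \<sigma>/2" by simp
  ultimately have "0 + Im (- Digamma (Complex (3/4 - \<sigma>/2) (- t/2)) / 2) - Im (- Digamma (Complex (1/4 - \<sigma>/2) (- t/2)) / 2) < 0"
    by simp
  with d show ?thesis by blast
qed

lemma f0_bounds:
  assumes "t > (0::real)"
  shows "- (pi / 2) < f_sig 0 t \<and> f_sig 0 t < 0"
proof -
  have "f_sig 0 t = - pi/4 + Im (Ln (sin (of_real pi * Complex (1/4) (-t/2))))"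
    using g_identity[of "-t/2"] by (simp add: f_sig_eq)
  with g_bound[of "-t/2"] show ?thesis by (auto simp: abs_less_iff)
qed

lemma f1_bounds:
  assumes "t > (0::real)"
  shows "- (3 * pi / 2) < f_sig 1 t \<and> f_sig 1 t < - (pi / 2)"
proof -
  define y where "y = - t/2"
  have y: "y < 0" using assms by (simp add: y_def)
  have e: "f_sig 1 t = - pi/4 + Im (ln_Gamma (Complex (1/4) y)) - Im (ln_Gamma (Complex (-1/4) y))"
    by (simp add: f_sig_eq y_def)
  define L where "L = Im (Ln (Complex (-1/4) y))"
  have "Complex (-1/4) y \<noteq> 0" by (simp add: complex_eq_iff)
  hence L: "L = arctan (Im (Complex (-1/4) y) / Re (Complex (-1/4) y)) - pi"
    unfolding L_def using y by (simp add: Im_Ln_eq)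
  have q: "Im (Complex (-1/4) y) / Re (Complex (-1/4) y) > 0" using y by simp
  have "arctan (Im (Complex (-1/4) y) / Re (Complex (-1/4) y)) > 0" using q by (simp add: zero_less_arctan_iff)
  moreover have "arctan (Im (Complex (-1/4) y) / Re (Complex (-1/4) y)) < pi/2" by (rule arctan_ubound)
  ultimately have Lb: "- pi < L" "L < - pi/2" unfolding L by auto
  have "f_sig 1 t = - pi/4 - (Im (ln_Gamma (Complex (3/4) y)) - Im (ln_Gamma (Complex (1/4) y))) + L"
    using lnGamma_rec[OF y] by (simp add: e L_def)
  also have "\<dots> = - pi/4 - Im (Ln (sin (of_real pi * Complex (1/4) y))) + L"
    by (simp add: g_identity)
  finally show ?thesis using g_bound[of y] Lb by (auto simp: abs_less_iff)
qed

theorem lemma5p2: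
  shows "(\<forall>t::real. 0 < t \<longrightarrow> - (pi / 2) < f_sig 0 t \<and> f_sig 0 t < 0)
       \<and> (\<forall>t::real. 0 < t \<longrightarrow> - (3 * pi / 2) < f_sig 1 t \<and> f_sig 1 t < - (pi / 2))
       \<and> (\<forall>\<sigma> t::real. 0 < \<sigma> \<and> \<sigma> < 1 \<and> 0 < t \<longrightarrow>
            (\<exists>D. ((\<lambda>s. f_sig s t) has_real_derivative D) (at \<sigma>) \<and> D < 0))
       \<and> \<not> (\<exists>\<sigma> t::real. \<exists>k::int. 0 < \<sigma> \<and> \<sigma> < 1 \<and> 0 < t \<and> f_sig \<sigma> t = 2 * pi * of_int k)"
proof (intro conjI allI impI)
  fix t :: real assume "0 < t" thus "- (pi / 2) < f_sig 0 t" "f_sig 0 t < 0" using f0_bounds by auto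
next
  fix t :: real assume "0 < t" thus "- (3 * pi / 2) < f_sig 1 t" "f_sig 1 t < - (pi / 2)" using f1_bounds by auto
next
  fix \<sigma> t :: real assume "0 < \<sigma> \<and> \<sigma> < 1 \<and> 0 < t"
  thus "\<exists>D. ((\<lambda>s. f_sig s t) has_real_derivative D) (at \<sigma>) \<and> D < 0" by (intro f_deriv) auto
next
  show "\<not> (\<exists>\<sigma> t::real. \<exists>k::int. 0 < \<sigma> \<and> \<sigma> < 1 \<and> 0 < t \<and> f_sig \<sigma> t = 2 * pi * of_int k)"
  proof
    assume "\<exists>\<sigma> t::real. \<exists>k::int. 0 < \<sigma> \<and> \<sigma> < 1 \<and> 0 < t \<and> f_sig \<sigma> t = 2 * pi * of_int k"
    then obtain \<sigma> t :: real and k :: int where h: "0 < \<sigma>" "\<sigma> < 1" "0 < t" "f_sig \<sigma> t = 2 * pi * of_int k"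
      by blast
    have "f_sig \<sigma> t < f_sig 0 t"
      by (rule DERIV_neg_imp_decreasing[of 0 \<sigma> "\<lambda>s. f_sig s t"]) (use h in \<open>auto intro!: f_deriv\<close>)
    moreover have "f_sig 1 t < f_sig \<sigma> t"
      by (rule DERIV_neg_imp_decreasing[of \<sigma> 1 "\<lambda>s. f_sig s t"]) (use h in \<open>auto intro!: f_deriv\<close>)
    ultimately have "- (3 * pi / 2) < 2 * pi * of_int k" "2 * pi * of_int k < 0"
      using f0_bounds[OF h(3)] f1_bounds[OF h(3)] h(4) by auto
    hence a: "(- 3 / 4) * (2 * pi) < of_int k * (2 * pi)" "of_int k * (2 * pi) < 0 * (2 * pi)"
      by (simp_all add: algebra_simps)
    have "- 3 / 4 < (of_int k :: real)" using a(1) pi_gt_zero by (subst (asm) mult_less_cancel_right_pos) auto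
    moreover have "(of_int k :: real) < 0" using a(2) pi_gt_zero by (subst (asm) mult_less_cancel_right_pos) auto
    ultimately have "- 3 < 4 * k" "k < 0" by linarith+
    thus False by linarith
  qed
qed

end
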